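(* Let $S$ be a semigroup such that for every finite coloring of $S$ there is a monochromatic proper IP set. Then for every finite coloring of $S$ there are infinitely many pairwise disjoint monochromatic proper IP sets (hence, since there are finitely many colors, infinitely many pairwise disjoint proper IP sets all of the same color).
   Context: Semigroups are written additively and are not assumed commutative. For a sequence $a_1,a_2,\dotsc$, $\mathrm{FS}(a_1,a_2,\dotsc):=\{a_{i_1}+\dotsb+a_{i_m}: m\ge1,\ i_1<\dotsb<i_m\}$. A proper IP set is a set containing $\mathrm{FS}(b_1,b_2,\dotsc)$ for some injective sequence $b_1,b_2,\dotsc$. A finite coloring of $S$ is a map from $S$ to a finite set; a subset is monochromatic if the coloring is constant on it. *)

theory Defs
  imports Main
begin

text \<open>Ordered finite sum b i1 + ... + bim of a nonempty index list (semigroups need not be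
  commutative nor have a zero).\<close>
fun ssum :: "(nat \<Rightarrow> 'a::semigroup_add) \<Rightarrow> nat list \<Rightarrow> 'a" where
  "ssum b [i] = b i"
| "ssum b (i # j # is) = b i + ssum b (j # is)"

definition FS :: "(nat \<Rightarrow> 'a::semigroup_add) \<Rightarrow> 'a set" where
  "FS b = {ssum b is | is. is \<noteq> [] \<and> sorted_wrt (<) is}"

definition proper_IP :: "'a::semigroup_add set \<Rightarrow> bool" where
  "proper_IP A \<longleftrightarrow> (\<exists>b. inj b \<and> FS b \<subseteq> A)"

definition finite_coloring :: "('a \<Rightarrow> 'c) \<Rightarrow> bool" where
  "finite_coloring c \<longleftrightarrow> finite (range c)"

definition monochromatic :: "('a \<Rightarrow> 'c) \<Rightarrow> 'a set \<Rightarrow> bool" where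
  "monochromatic c A \<longleftrightarrow> (\<exists>k. \<forall>x\<in>A. c x = k)"

end

theory Submission
  imports Defs
begin


lemma FS_mem: "b 0 \<in> FS b"
  unfolding FS_def by (rule CollectI, rule exI[of _ "[0]"]) simp

lemma ssum_append: "xs \<noteq> [] \<Longrightarrow> ys \<noteq> [] \<Longrightarrow> ssum b (xs @ ys) = ssum b xs + ssum b ys"
proof (induction xs)
  case Nil then show ?case by simp
next
  case (Cons x xs)
  show ?case
  proof (cases xs)
    case Nil
    then obtain y ys' where "ys = y # ys'" using Cons.prems by (cases ys) auto
    then show ?thesis using Nil by simp
  next
    case (Cons x' xs')
    then obtain y ys' where ys: "ys = y # ys'" using \<open>ys \<noteq> []\<close> by (cases ys) auto
    have "ssum b ((x # xs) @ ys) = b x + ssum b (xs @ ys)" using Cons ys by simp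
    also have "\<dots> = b x + (ssum b xs + ssum b ys)" using Cons.IH Cons.prems \<open>xs = x' # xs'\<close> by simp
    also have "\<dots> = ssum b (x # xs) + ssum b ys" using Cons by (simp add: add.assoc)
    finally show ?thesis .
  qed
qed

lemma ssum_snoc: "xs \<noteq> [] \<Longrightarrow> ssum b (xs @ [k]) = ssum b xs + b k"
  using ssum_append[of xs "[k]" b] by simp

lemma ssum_map: "xs \<noteq> [] \<Longrightarrow> ssum (\<lambda>i. b (f i)) xs = ssum b (map f xs)"
proof (induction xs)
  case Nil then show ?case by simp
next
  case (Cons x xs)
  then show ?case by (cases xs) auto
qed

lemma ssum_cong: "xs \<noteq> [] \<Longrightarrow> (\<And>i. i \<in> set xs \<Longrightarrow> f i = g i) \<Longrightarrow> ssum f xs = ssum g xs"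
proof (induction xs)
  case Nil then show ?case by simp
next
  case (Cons x xs)
  then show ?case by (cases xs) auto
qed

lemma FS_shift: "FS (\<lambda>i. b (i + m)) \<subseteq> FS b"
proof
  fix x assume "x \<in> FS (\<lambda>i. b (i + m))"
  then obtain js where js: "js \<noteq> []" "sorted_wrt (<) js" "x = ssum (\<lambda>i. b (i + m)) js"
    unfolding FS_def by auto
  have "x = ssum b (map (\<lambda>i. i + m) js)" using js ssum_map[of js b "\<lambda>i. i + m"] by simp
  moreover have "sorted_wrt (<) (map (\<lambda>i. i + m) js)"
    using js(2) by (simp add: sorted_wrt_map)
  ultimately show "x \<in> FS b" using js(1) unfolding FS_def by auto
qed

lemma inj_shift: "inj (b :: nat \<Rightarrow> 'a) \<Longrightarrow> inj (\<lambda>i. b (i + m))"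
  by (rule injI) (auto simp: inj_eq)

definition Rp :: "'a::semigroup_add set \<Rightarrow> bool" where
  "Rp F \<longleftrightarrow> (\<forall>d :: 'a \<Rightarrow> nat. finite_coloring d \<longrightarrow> (\<exists>A \<subseteq> F. proper_IP A \<and> monochromatic d A))"

lemma proper_IP_mono: "proper_IP A \<Longrightarrow> A \<subseteq> B \<Longrightarrow> proper_IP B"
  unfolding proper_IP_def by blast

lemma proper_IP_nonempty: "proper_IP A \<Longrightarrow> A \<noteq> {}"
  unfolding proper_IP_def using FS_mem by blast

lemma Rp_mono: "Rp A \<Longrightarrow> A \<subseteq> B \<Longrightarrow> Rp B"
  unfolding Rp_def by (meson subset_trans)

lemma Rp_P: "Rp F \<Longrightarrow> proper_IP F"
proof -
  assume "Rp F"
  moreover have "finite_coloring (\<lambda>_::'a. 0::nat)" unfolding finite_coloring_def by simp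
  ultimately obtain A where "A \<subseteq> F" "proper_IP A" unfolding Rp_def by blast
  then show ?thesis using proper_IP_mono by blast
qed

lemma Rp_split:
  assumes "Rp F" "F \<subseteq> F1 \<union> F2" shows "Rp F1 \<or> Rp F2"
proof (rule ccontr)
  assume nn: "\<not> (Rp F1 \<or> Rp F2)"
  have "\<not> Rp F1" using nn by simp
  then obtain d1 :: "'a \<Rightarrow> nat" where fd1: "finite_coloring d1"
    and n1: "\<And>A. A \<subseteq> F1 \<Longrightarrow> proper_IP A \<Longrightarrow> \<not> monochromatic d1 A"
    unfolding Rp_def by auto
  have "\<not> Rp F2" using nn by simp
  then obtain d2 :: "'a \<Rightarrow> nat" where fd2: "finite_coloring d2"
    and n2: "\<And>A. A \<subseteq> F2 \<Longrightarrow> proper_IP A \<Longrightarrow> \<not> monochromatic d2 A"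
    unfolding Rp_def by auto
  define d where "d x = (if x \<in> F1 then 2 * d1 x else 2 * d2 x + 1)" for x
  have rs: "range d \<subseteq> (\<lambda>k. 2*k) ` range d1 \<union> (\<lambda>k. 2*k+1) ` range d2"
    unfolding d_def by auto
  have "finite ((\<lambda>k. 2*k) ` range d1 \<union> (\<lambda>k. 2*k+1) ` range d2)"
    using fd1 fd2 unfolding finite_coloring_def by simp
  then have "finite_coloring d" unfolding finite_coloring_def using rs by (rule finite_subset[rotated])
  then obtain A where A: "A \<subseteq> F" "proper_IP A" "monochromatic d A"
    using assms(1) unfolding Rp_def by blast
  then obtain k where k: "\<And>x. x \<in> A \<Longrightarrow> d x = k" unfolding monochromatic_def by blast
  show False
  proof (cases "even k")
    case True
    have "\<And>x. x \<in> A \<Longrightarrow> x \<in> F1 \<and> d1 x = k div 2"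
    proof -
      fix x assume "x \<in> A"
      then have "d x = k" by (rule k)
      then show "x \<in> F1 \<and> d1 x = k div 2" using True unfolding d_def
        by (auto split: if_splits)
    qed
    then show False using n1[of A] A(2) unfolding monochromatic_def by blast
  next
    case False
    have "\<And>x. x \<in> A \<Longrightarrow> x \<in> F2 \<and> d2 x = k div 2"
    proof -
      fix x assume "x \<in> A"
      then have "d x = k" "x \<in> F" using k A(1) by auto
      then show "x \<in> F2 \<and> d2 x = k div 2" using False assms(2) unfolding d_def
        by (auto split: if_splits)
    qed
    then show False using n2[of A] A(2) unfolding monochromatic_def by blast
  qed
qed

lemma Rp_finite_union: "finite K \<Longrightarrow> Rp (\<Union>k\<in>K. C k) \<Longrightarrow> \<exists>k\<in>K. Rp (C k)"
proof (induction K rule: finite_induct)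
  case empty
  then show ?case using Rp_P[of "\<Union>k\<in>{}. C k"] proper_IP_nonempty[of "\<Union>k\<in>{}. C k"] by simp
next
  case (insert x K)
  then have "Rp (C x) \<or> Rp (\<Union>k\<in>K. C k)" using Rp_split[of "\<Union>k\<in>insert x K. C k" "C x"] by auto
  then show ?case using insert by blast
qed



locale badF =
  fixes F :: "'a::semigroup_add set"
  assumes RF: "Rp F"
    and H: "\<And>G. G \<subseteq> F \<Longrightarrow> proper_IP G \<Longrightarrow> \<not> Rp (F - G)"
begin

definition L :: "'a set \<Rightarrow> bool" where "L B \<longleftrightarrow> Rp (F \<inter> B)"

lemma L_mono: "L A \<Longrightarrow> A \<subseteq> B \<Longrightarrow> L B"
  unfolding L_def by (rule Rp_mono) auto

lemma L_compl: "L A \<or> L (- A)"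
  unfolding L_def by (rule Rp_split[OF RF]) auto

lemma L_disj: "L A \<Longrightarrow> L B \<Longrightarrow> A \<inter> B = {} \<Longrightarrow> False"
proof -
  assume a: "L A" "L B" "A \<inter> B = {}"
  have "proper_IP (F \<inter> A)" using a(1) Rp_P unfolding L_def by blast
  moreover have "Rp (F - (F \<inter> A))" using Rp_mono[OF a(2)[unfolded L_def], of "F - (F \<inter> A)"] a(3) by auto
  ultimately show False using H[of "F \<inter> A"] by blast
qed

lemma L_Int: "L A \<Longrightarrow> L B \<Longrightarrow> L (A \<inter> B)"
proof -
  assume a: "L A" "L B"
  have "Rp (F \<inter> (A \<inter> B)) \<or> Rp (F \<inter> - B)"
    using a(1) unfolding L_def by (rule Rp_split) auto
  then show ?thesis using L_disj[OF a(2), of "- B"] unfolding L_def by auto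
qed

lemma L_empty: "\<not> L {}"
  using L_disj[of "{}" "{}"] by blast

lemma L_ex: "L A \<Longrightarrow> \<exists>x. x \<in> A"
  using L_empty by (metis ex_in_conv)

lemma L_compl_iff: "L (- A) \<longleftrightarrow> \<not> L A"
  using L_compl[of A] L_disj[of A "- A"] by auto

lemma L_P: "G \<subseteq> F \<Longrightarrow> proper_IP G \<Longrightarrow> L G"
  using L_compl[of G] H[of G] unfolding L_def by (metis Diff_eq inf_commute)

lemma L_single: "\<not> L {t}"
proof
  assume "L {t}"
  then have "proper_IP (F \<inter> {t})" using Rp_P unfolding L_def by blast
  then obtain b where b: "inj b" "FS b \<subseteq> {t}" unfolding proper_IP_def by blast
  have "b 0 \<in> FS b" by (rule FS_mem)
  moreover have "b 1 \<in> FS b" using FS_mem[of "\<lambda>i. b (i + 1)"] FS_shift[of b 1] by auto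
  ultimately have "b 0 = b 1" using b(2) by auto
  then show False by (metis b(1) injD zero_neq_one)
qed

lemma L_UNIV: "L UNIV" using RF unfolding L_def by simp

lemma L_finite_compl: "finite S \<Longrightarrow> L (- S)"
proof (induction S rule: finite_induct)
  case empty then show ?case using L_UNIV by simp
next
  case (insert x S)
  have "L (- {x})" using L_single[of x] L_compl_iff[of "{x}"] by simp
  then have "L (- {x} \<inter> - S)" using insert L_Int by blast
  moreover have "- insert x S = - {x} \<inter> - S" by auto
  ultimately show ?case by simp
qed

lemma L_INT: "finite I \<Longrightarrow> (\<And>i. i \<in> I \<Longrightarrow> L (B i)) \<Longrightarrow> L {y. \<forall>i\<in>I. y \<in> B i}"
proof (induction I rule: finite_induct)
  case empty then show ?case using L_UNIV by simp
next
  case (insert x I)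
  have "L (B x \<inter> {y. \<forall>i\<in>I. y \<in> B i})" using insert L_Int by simp
  moreover have "B x \<inter> {y. \<forall>i\<in>I. y \<in> B i} = {y. \<forall>i\<in>insert x I. y \<in> B i}" by auto
  ultimately show ?case by simp
qed

lemma Idem: assumes "L A" shows "L {x. L {y. x + y \<in> A}}"
proof -
  have "proper_IP (F \<inter> A)" using assms Rp_P unfolding L_def by blast
  then obtain b where b: "inj b" "FS b \<subseteq> F \<inter> A" unfolding proper_IP_def by blast
  have "L (FS b)" using b by (intro L_P) (auto simp: proper_IP_def)
  moreover have "FS b \<subseteq> {x. L {y. x + y \<in> A}}"
  proof
    fix x assume "x \<in> FS b"
    then obtain ks where ks: "ks \<noteq> []" "sorted_wrt (<) ks" "x = ssum b ks"
      unfolding FS_def by auto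
    define m where "m = Suc (last ks)"
    have tl: "FS (\<lambda>i. b (i + m)) \<subseteq> FS b" by (rule FS_shift)
    have "L (FS (\<lambda>i. b (i + m)))"
      using b tl inj_shift[OF b(1), of m] by (intro L_P) (auto simp: proper_IP_def)
    moreover have "FS (\<lambda>i. b (i + m)) \<subseteq> {y. x + y \<in> A}"
    proof
      fix y assume "y \<in> FS (\<lambda>i. b (i + m))"
      then obtain js where js: "js \<noteq> []" "sorted_wrt (<) js" "y = ssum (\<lambda>i. b (i + m)) js"
        unfolding FS_def by auto
      have y: "y = ssum b (map (\<lambda>i. i + m) js)" using js ssum_map[of js b "\<lambda>i. i + m"] by simp
      have lastmax: "\<forall>i\<in>set ks. i \<le> last ks"
      proof -
        obtain ks1 k where "ks = ks1 @ [k]" using ks(1) by (metis rev_exhaust)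
        then show ?thesis using ks(2) by (auto simp: sorted_wrt_append)
      qed
      have "\<forall>x\<in>set ks. \<forall>y\<in>set (map (\<lambda>i. i + m) js). x < y"
        using lastmax unfolding m_def by fastforce
      then have "sorted_wrt (<) (ks @ map (\<lambda>i. i + m) js)"
        using ks(2) js(2) by (simp add: sorted_wrt_append sorted_wrt_map)
      moreover have "x + y = ssum b (ks @ map (\<lambda>i. i + m) js)"
        using ks js y by (simp add: ssum_append)
      ultimately have "x + y \<in> FS b" using ks(1) unfolding FS_def by auto
      then show "y \<in> {y. x + y \<in> A}" using b by auto
    qed
    ultimately show "x \<in> {x. L {y. x + y \<in> A}}" using L_mono by blast
  qed
  ultimately show ?thesis using L_mono by blast
qed

lemma Conv: assumes "L {x. L {y. x + y \<in> A}}" shows "L A"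
proof (rule ccontr)
  assume "\<not> L A"
  then have "L (- A)" using L_compl_iff by blast
  then have "L {x. L {y. x + y \<in> - A}}" by (rule Idem)
  then have "L ({x. L {y. x + y \<in> A}} \<inter> {x. L {y. x + y \<in> - A}})" using assms L_Int by blast
  then obtain x where "L {y. x + y \<in> A}" "L {y. x + y \<in> - A}" using L_ex by blast
  then show False using L_disj[of "{y. x + y \<in> A}" "{y. x + y \<in> - A}"] by auto
qed

definition Fs :: "'a set" where "Fs = {x \<in> F. L {y. x + y \<in> F}}"

lemma L_F: "L F" using RF unfolding L_def by simp

lemma L_Fs: "L Fs"
proof -
  have "L (F \<inter> {x. L {y. x + y \<in> F}})" using L_Int[OF L_F Idem[OF L_F]] .
  then show ?thesis unfolding Fs_def by (simp add: Collect_conj_eq)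
qed

lemma Fs_sub: "Fs \<subseteq> F" unfolding Fs_def by auto

lemma Fs_step: assumes "x \<in> Fs" shows "L {y. x + y \<in> Fs}"
proof -
  have a: "L {y. x + y \<in> F}" using assms unfolding Fs_def by auto
  have "L {y. L {z. y + z \<in> {w. x + w \<in> F}}}" using Idem[OF a] .
  then have b: "L {y. L {z. x + y + z \<in> F}}" by (simp add: add.assoc)
  have "L ({y. x + y \<in> F} \<inter> {y. L {z. x + y + z \<in> F}})" using L_Int[OF a b] .
  moreover have "{y. x + y \<in> F} \<inter> {y. L {z. x + y + z \<in> F}} = {y. x + y \<in> Fs}"
    unfolding Fs_def by auto
  ultimately show ?thesis by simp
qed

end


definition sums :: "'a::semigroup_add list \<Rightarrow> bool \<Rightarrow> 'a set" where
  "sums l p = {ssum (\<lambda>i. l ! i) ks | ks. ks \<noteq> [] \<and> sorted_wrt (<) ks \<and> (\<forall>i\<in>set ks. i < length l \<and> even i = p)}"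

lemma sums_Nil: "sums ([]::'a::semigroup_add list) p = {}"
proof -
  have "\<not> (ks \<noteq> [] \<and> (\<forall>i\<in>set ks. i < length ([]::'a list) \<and> even i = p))" for ks
    by (cases ks) auto
  then show ?thesis unfolding sums_def by blast
qed

lemma sums_snoc_other:
  assumes "p \<noteq> even (length l)" shows "sums (l @ [y]) p = sums l p"
proof -
  have iff: "(\<forall>i\<in>set ks. i < length (l @ [y]) \<and> even i = p) \<longleftrightarrow>
        (\<forall>i\<in>set ks. i < length l \<and> even i = p)" for ks
    using assms by (auto simp: less_Suc_eq)
  have cg: "ks \<noteq> [] \<Longrightarrow> (\<forall>i\<in>set ks. i < length l) \<Longrightarrow>
      ssum (\<lambda>i. (l @ [y]) ! i) ks = ssum (\<lambda>i. l ! i) ks" for ks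
    by (rule ssum_cong) (auto simp: nth_append)
  show ?thesis
  proof (rule set_eqI)
    fix x
    show "x \<in> sums (l @ [y]) p \<longleftrightarrow> x \<in> sums l p"
    proof
      assume "x \<in> sums (l @ [y]) p"
      then obtain ks where ks: "x = ssum (\<lambda>i. (l @ [y]) ! i) ks" "ks \<noteq> []" "sorted_wrt (<) ks"
        "\<forall>i\<in>set ks. i < length (l @ [y]) \<and> even i = p" unfolding sums_def by blast
      have k2: "\<forall>i\<in>set ks. i < length l \<and> even i = p" using ks(4) iff by blast
      then have "x = ssum (\<lambda>i. l ! i) ks" using ks(1) cg[OF ks(2)] by simp
      then show "x \<in> sums l p" unfolding sums_def using ks(2,3) k2 by blast
    next
      assume "x \<in> sums l p"
      then obtain ks where ks: "x = ssum (\<lambda>i. l ! i) ks" "ks \<noteq> []" "sorted_wrt (<) ks"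
        "\<forall>i\<in>set ks. i < length l \<and> even i = p" unfolding sums_def by blast
      have k2: "\<forall>i\<in>set ks. i < length (l @ [y]) \<and> even i = p" using ks(4) iff by blast
      have "x = ssum (\<lambda>i. (l @ [y]) ! i) ks" using ks(1) cg[OF ks(2)] ks(4) by simp
      then show "x \<in> sums (l @ [y]) p" unfolding sums_def using ks(2,3) k2 by blast
    qed
  qed
qed

lemma sums_snoc_same:
  "sums (l @ [y]) (even (length l)) =
     sums l (even (length l)) \<union> {y} \<union> (\<lambda>s. s + y) ` sums l (even (length l))"
  (is "?A = ?B")
proof
  let ?n = "length l" and ?p = "even (length l)"
  let ?f' = "\<lambda>i. (l @ [y]) ! i" and ?f = "\<lambda>i. l ! i"
  have cong: "ks \<noteq> [] \<Longrightarrow> (\<forall>i\<in>set ks. i < ?n) \<Longrightarrow> ssum ?f' ks = ssum ?f ks" for ks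
    by (rule ssum_cong) (auto simp: nth_append)
  show "?A \<subseteq> ?B"
  proof
    fix x assume "x \<in> ?A"
    then obtain ks where ks: "ks \<noteq> []" "sorted_wrt (<) ks" "\<forall>i\<in>set ks. i < Suc ?n \<and> even i = ?p"
      "x = ssum ?f' ks" unfolding sums_def by auto
    obtain ks1 k where kk: "ks = ks1 @ [k]" using ks(1) by (metis rev_exhaust)
    have s1: "sorted_wrt (<) ks1" "\<forall>j\<in>set ks1. j < k" using ks(2) kk by (auto simp: sorted_wrt_append)
    have kn: "k < Suc ?n" using ks(3) kk by auto
    show "x \<in> ?B"
    proof (cases "k = ?n")
      case True
      show ?thesis
      proof (cases "ks1 = []")
        case True
        then have "x = y" using ks(4) kk \<open>k = ?n\<close> by simp
        then show ?thesis by simp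
      next
        case False
        have "x = ssum ?f' ks1 + y" using ks(4) kk \<open>k = ?n\<close> False by (simp add: ssum_snoc)
        also have "ssum ?f' ks1 = ssum ?f ks1" using cong[OF False] s1(2) \<open>k = ?n\<close> by auto
        finally have "x = ssum ?f ks1 + y" .
        moreover have "ssum ?f ks1 \<in> sums l ?p" unfolding sums_def
          using False s1 ks(3) kk \<open>k = ?n\<close> by auto
        ultimately show ?thesis by blast
      qed
    next
      case False
      then have "k < ?n" using kn by simp
      then have lt: "\<forall>i\<in>set ks. i < ?n" using s1(2) kk by auto
      then have "x = ssum ?f ks" using ks(4) cong[OF ks(1)] by simp
      then have "x \<in> sums l ?p" unfolding sums_def using ks lt by auto
      then show ?thesis by simp
    qed
  qed
  show "?B \<subseteq> ?A"
  proof
    fix x assume "x \<in> ?B"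
    then consider "x \<in> sums l ?p" | "x = y" | "x \<in> (\<lambda>s. s + y) ` sums l ?p" by blast
    then show "x \<in> ?A"
    proof cases
      case 1
      then obtain ks where ks: "ks \<noteq> []" "sorted_wrt (<) ks" "\<forall>i\<in>set ks. i < ?n \<and> even i = ?p"
        "x = ssum ?f ks" unfolding sums_def by auto
      have lt: "\<forall>i\<in>set ks. i < ?n" using ks(3) by blast
      have "ssum ?f' ks = ssum ?f ks" using cong[OF ks(1) lt] .
      then have xe: "x = ssum ?f' ks" using ks(4) by simp
      have "\<forall>i\<in>set ks. i < length (l @ [y]) \<and> even i = ?p" using ks(3) by auto
      then show ?thesis unfolding sums_def using ks(1,2) xe by blast
    next
      case 2
      then have "x = ssum ?f' [?n]" by simp
      then show ?thesis unfolding sums_def by (intro CollectI exI[of _ "[?n]"]) auto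
    next
      case 3
      then obtain s where s: "s \<in> sums l ?p" "x = s + y" by blast
      then obtain ks where ks: "ks \<noteq> []" "sorted_wrt (<) ks" "\<forall>i\<in>set ks. i < ?n \<and> even i = ?p"
        "s = ssum ?f ks" unfolding sums_def by auto
      have "x = ssum ?f' ks + ?f' ?n" using s ks cong by simp
      then have "x = ssum ?f' (ks @ [?n])" using ks(1) by (simp add: ssum_snoc)
      moreover have "sorted_wrt (<) (ks @ [?n])" using ks by (auto simp: sorted_wrt_append)
      ultimately show ?thesis unfolding sums_def using ks by (intro CollectI exI[of _ "ks @ [?n]"]) auto
    qed
  qed
qed



context badF
begin

definition coll :: "'a \<Rightarrow> 'a \<Rightarrow> bool" where "coll s t \<longleftrightarrow> L {z. s + z = t}"

lemma coll_unique: "coll s v \<Longrightarrow> coll s w \<Longrightarrow> v = w"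
proof -
  assume "coll s v" "coll s w"
  then have "L ({z. s + z = v} \<inter> {z. s + z = w})" unfolding coll_def by (rule L_Int)
  then obtain z where "z \<in> {z. s + z = v} \<inter> {z. s + z = w}" using L_ex by blast
  then have "s + z = v" "s + z = w" by auto
  then show "v = w" by simp
qed

lemma coll_finite: "finite {v. coll s v}"
proof (cases "\<exists>v. coll s v")
  case True
  then obtain v where v: "coll s v" by blast
  have "{v. coll s v} \<subseteq> {v}" using coll_unique[OF v] by blast
  then show ?thesis by (rule finite_subset) simp
next
  case False then show ?thesis by simp
qed

definition Vs :: "'a set \<Rightarrow> 'a set" where "Vs Y = {v. \<exists>t\<in>Y. coll t v}"

lemma Vs_finite: "finite Y \<Longrightarrow> finite (Vs Y)"
proof -
  assume "finite Y"
  moreover have "Vs Y = (\<Union>t\<in>Y. {v. coll t v})" unfolding Vs_def by blast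
  ultimately show ?thesis using coll_finite by simp
qed

definition Inv :: "'a set \<Rightarrow> 'a set \<Rightarrow> bool" where
  "Inv X Y \<longleftrightarrow> finite X \<and> finite Y \<and> X \<subseteq> Fs \<and> Y \<subseteq> Fs \<and> X \<inter> Y = {} \<and>
     (\<forall>s\<in>X. \<forall>t\<in>Y. \<not> coll s t) \<and> (\<forall>s\<in>Y. \<forall>t\<in>X. \<not> coll s t) \<and>
     (\<forall>s\<in>X. \<forall>t\<in>Y. \<forall>v. coll s v \<longrightarrow> \<not> coll t v)"

lemma Inv_sym: "Inv X Y \<Longrightarrow> Inv Y X"
  unfolding Inv_def by (simp add: Int_commute) blast

definition good :: "'a set \<Rightarrow> 'a set \<Rightarrow> 'a set \<Rightarrow> 'a \<Rightarrow> bool" where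
  "good X Y W y \<longleftrightarrow> y \<in> Fs \<and> (\<forall>s\<in>X. s + y \<in> Fs) \<and> y \<notin> W \<and> y \<notin> Y \<union> Vs Y \<and>
     (\<forall>s\<in>X. s + y \<notin> Y \<union> Vs Y) \<and> (\<forall>t\<in>Y \<union> Vs Y. \<not> coll y t) \<and>
     (\<forall>s\<in>X. \<forall>t\<in>Y \<union> Vs Y. \<not> coll (s + y) t)"

lemma coll_not_L: "\<not> L {y. coll y t}"
proof
  assume "L {y. coll y t}"
  moreover have "{y. coll y t} = {x. L {z. x + z \<in> {t}}}" unfolding coll_def by simp
  ultimately have "L {x. L {z. x + z \<in> {t}}}" by simp
  then have "L {t}" by (rule Conv)
  then show False using L_single by blast
qed

lemma coll_shift_not_L: "\<not> coll s t \<Longrightarrow> \<not> L {y. coll (s + y) t}"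
proof
  assume n: "\<not> coll s t" and a: "L {y. coll (s + y) t}"
  have "{y. coll (s + y) t} = {x. L {z. x + z \<in> {w. s + w = t}}}"
    unfolding coll_def by (simp add: add.assoc)
  then have "L {x. L {z. x + z \<in> {w. s + w = t}}}" using a by simp
  then have "L {w. s + w = t}" by (rule Conv)
  then show False using n unfolding coll_def by blast
qed

lemma good_exists:
  assumes I: "Inv X Y" and fW: "finite W" shows "\<exists>y. good X Y W y"
proof -
  define Z where "Z = Y \<union> Vs Y"
  have fX: "finite X" and fY: "finite Y" and XF: "X \<subseteq> Fs" using I unfolding Inv_def by auto
  have fZ: "finite Z" unfolding Z_def using fY Vs_finite by simp
  have nc: "\<not> coll s t" if "s \<in> X" "t \<in> Z" for s t
  proof (cases "t \<in> Y")
    case True then show ?thesis using I that unfolding Inv_def by blast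
  next
    case False
    then have "t \<in> Vs Y" using that Z_def by simp
    then obtain u where "u \<in> Y" "coll u t" unfolding Vs_def by blast
    then show ?thesis using I that unfolding Inv_def by blast
  qed
  have S2: "L {y. \<forall>s\<in>X. y \<in> {y. s + y \<in> Fs}}"
    using fX by (rule L_INT) (use XF Fs_step in blast)
  have S3: "L (- (W \<union> Z))" using fW fZ by (intro L_finite_compl) simp
  have S4: "L {y. \<forall>q\<in>X \<times> Z. y \<in> - {y. fst q + y = snd q}}"
  proof (rule L_INT)
    show "finite (X \<times> Z)" using fX fZ by simp
    fix q assume "q \<in> X \<times> Z"
    then have "\<not> coll (fst q) (snd q)" using nc by (cases q) auto
    then show "L (- {y. fst q + y = snd q})" using L_compl_iff unfolding coll_def by blast
  qed
  have S5: "L {y. \<forall>t\<in>Z. y \<in> - {y. coll y t}}"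
    using fZ by (rule L_INT) (use L_compl_iff coll_not_L in blast)
  have S6: "L {y. \<forall>q\<in>X \<times> Z. y \<in> - {y. coll (fst q + y) (snd q)}}"
  proof (rule L_INT)
    show "finite (X \<times> Z)" using fX fZ by simp
    fix q assume "q \<in> X \<times> Z"
    then have "\<not> coll (fst q) (snd q)" using nc by (cases q) auto
    then show "L (- {y. coll (fst q + y) (snd q)})" using L_compl_iff coll_shift_not_L by blast
  qed
  have "L (Fs \<inter> {y. \<forall>s\<in>X. y \<in> {y. s + y \<in> Fs}} \<inter> - (W \<union> Z)
        \<inter> {y. \<forall>q\<in>X \<times> Z. y \<in> - {y. fst q + y = snd q}} \<inter> {y. \<forall>t\<in>Z. y \<in> - {y. coll y t}}
        \<inter> {y. \<forall>q\<in>X \<times> Z. y \<in> - {y. coll (fst q + y) (snd q)}})"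
    by (intro L_Int L_Fs S2 S3 S4 S5 S6)
  then obtain y where y: "y \<in> Fs \<inter> {y. \<forall>s\<in>X. y \<in> {y. s + y \<in> Fs}} \<inter> - (W \<union> Z)
        \<inter> {y. \<forall>q\<in>X \<times> Z. y \<in> - {y. fst q + y = snd q}} \<inter> {y. \<forall>t\<in>Z. y \<in> - {y. coll y t}}
        \<inter> {y. \<forall>q\<in>X \<times> Z. y \<in> - {y. coll (fst q + y) (snd q)}}" using L_ex by blast
  have y': "y \<in> Fs" "\<forall>s\<in>X. s + y \<in> Fs" "y \<notin> W \<union> Z" "\<forall>q\<in>X \<times> Z. fst q + y \<noteq> snd q"
    "\<forall>t\<in>Z. \<not> coll y t" "\<forall>q\<in>X \<times> Z. \<not> coll (fst q + y) (snd q)"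
    using y by auto
  have g1: "y \<in> Fs" "\<forall>s\<in>X. s + y \<in> Fs" "y \<notin> W" "y \<notin> Z" using y'(1,2,3) by auto
  have g4: "\<forall>s\<in>X. s + y \<notin> Z"
  proof (intro ballI notI)
    fix s assume "s \<in> X" "s + y \<in> Z"
    then have "(s, s + y) \<in> X \<times> Z" by simp
    then have "fst (s, s + y) + y \<noteq> snd (s, s + y)" using y'(4) by blast
    then show False by simp
  qed
  have g5: "\<forall>t\<in>Z. \<not> coll y t" using y'(5) .
  have g6: "\<forall>s\<in>X. \<forall>t\<in>Z. \<not> coll (s + y) t"
  proof (intro ballI)
    fix s t assume "s \<in> X" "t \<in> Z"
    then have "(s, t) \<in> X \<times> Z" by simp
    then have "\<not> coll (fst (s, t) + y) (snd (s, t))" using y'(6) by blast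
    then show "\<not> coll (s + y) t" by simp
  qed
  show ?thesis unfolding good_def using g1 g4 g5 g6 unfolding Z_def by blast
qed

lemma good_Inv:
  assumes I: "Inv X Y" and g: "good X Y W y"
  shows "Inv (X \<union> {y} \<union> (\<lambda>s. s + y) ` X) Y"
proof -
  let ?X = "X \<union> {y} \<union> (\<lambda>s. s + y) ` X"
  have i1: "finite X" "finite Y" "X \<subseteq> Fs" "Y \<subseteq> Fs" "X \<inter> Y = {}"
    "\<forall>s\<in>X. \<forall>t\<in>Y. \<not> coll s t" "\<forall>s\<in>Y. \<forall>t\<in>X. \<not> coll s t"
    "\<forall>s\<in>X. \<forall>t\<in>Y. \<forall>v. coll s v \<longrightarrow> \<not> coll t v" using I unfolding Inv_def by auto
  have g1: "y \<in> Fs" "\<forall>s\<in>X. s + y \<in> Fs" "y \<notin> Y \<union> Vs Y" "\<forall>s\<in>X. s + y \<notin> Y \<union> Vs Y"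
    "\<forall>t\<in>Y \<union> Vs Y. \<not> coll y t" "\<forall>s\<in>X. \<forall>t\<in>Y \<union> Vs Y. \<not> coll (s + y) t"
    using g unfolding good_def by auto
  have new: "\<And>x. x \<in> ?X \<Longrightarrow> x \<notin> X \<Longrightarrow> x \<notin> Y \<union> Vs Y \<and> (\<forall>t\<in>Y \<union> Vs Y. \<not> coll x t)"
    using g1 by blast
  have a1: "finite ?X" using i1 by simp
  have a2: "?X \<subseteq> Fs" using i1 g1 by blast
  have a3: "?X \<inter> Y = {}"
  proof -
    have "x \<notin> Y" if "x \<in> ?X" for x
      using that i1(5) new[of x] by blast
    then show ?thesis by blast
  qed
  have a4: "\<forall>s\<in>?X. \<forall>t\<in>Y. \<not> coll s t"
  proof (intro ballI)
    fix s t assume "s \<in> ?X" "t \<in> Y"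
    then show "\<not> coll s t" using i1(6) new[of s] by (cases "s \<in> X") auto
  qed
  have a5: "\<forall>s\<in>Y. \<forall>t\<in>?X. \<not> coll s t"
  proof (intro ballI)
    fix s t assume s: "s \<in> Y" and t: "t \<in> ?X"
    show "\<not> coll s t"
    proof (cases "t \<in> X")
      case True then show ?thesis using i1(7) s by blast
    next
      case False
      then have "t \<notin> Vs Y" using new[OF t] by blast
      then show ?thesis using s unfolding Vs_def by blast
    qed
  qed
  have a6: "\<forall>s\<in>?X. \<forall>t\<in>Y. \<forall>v. coll s v \<longrightarrow> \<not> coll t v"
  proof (intro ballI allI impI notI)
    fix s t v assume s: "s \<in> ?X" and t: "t \<in> Y" and cs: "coll s v" and ct: "coll t v"
    show False
    proof (cases "s \<in> X")
      case True then show ?thesis using i1(8) t cs ct by blast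
    next
      case False
      have "v \<in> Vs Y" using t ct unfolding Vs_def by blast
      then show ?thesis using new[OF s False] cs by blast
    qed
  qed
  show ?thesis unfolding Inv_def using a1 a2 a3 a4 a5 a6 i1(2,4) by blast
qed

end


context badF
begin

definition pick :: "'a list \<Rightarrow> 'a" where
  "pick l = (SOME y. good (sums l (even (length l))) (sums l (\<not> even (length l))) (set l) y)"

fun seq :: "nat \<Rightarrow> 'a list" where
  "seq 0 = []"
| "seq (Suc n) = seq n @ [pick (seq n)]"

lemma Inv_iff: "Inv (sums l True) (sums l False) \<longleftrightarrow> Inv (sums l q) (sums l (\<not> q))"
  by (cases q) (auto intro: Inv_sym)

lemma Inv_empty: "Inv {} {}" unfolding Inv_def by simp

lemma sums_finite_seq: "finite (sums (seq n) p)"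
proof (induction n)
  case 0 then show ?case by (simp add: sums_Nil)
next
  case (Suc n)
  show ?case
  proof (cases "p = even (length (seq n))")
    case True
    then show ?thesis using Suc sums_snoc_same[of "seq n" "pick (seq n)"] by simp
  next
    case False
    then show ?thesis using Suc sums_snoc_other[OF False, of "pick (seq n)"] by simp
  qed
qed

lemma seq_props: "length (seq n) = n \<and> distinct (seq n) \<and> Inv (sums (seq n) True) (sums (seq n) False)"
proof (induction n)
  case 0 then show ?case using Inv_empty by (simp add: sums_Nil)
next
  case (Suc n)
  define l where "l = seq n"
  define p where "p = even n"
  define y where "y = pick l"
  have len: "length l = n" and dl: "distinct l" and I0: "Inv (sums l True) (sums l False)"
    using Suc unfolding l_def by auto
  have I: "Inv (sums l p) (sums l (\<not> p))" using I0 Inv_iff by blast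
  have "\<exists>y. good (sums l p) (sums l (\<not> p)) (set l) y"
    using good_exists[OF I] by simp
  then have g: "good (sums l p) (sums l (\<not> p)) (set l) y"
    unfolding y_def pick_def len p_def[symmetric] by (rule someI_ex)
  have I2: "Inv (sums l p \<union> {y} \<union> (\<lambda>s. s + y) ` sums l p) (sums l (\<not> p))"
    by (rule good_Inv[OF I g])
  have e1: "sums (l @ [y]) p = sums l p \<union> {y} \<union> (\<lambda>s. s + y) ` sums l p"
    using sums_snoc_same[of l y] len p_def by simp
  have e2: "sums (l @ [y]) (\<not> p) = sums l (\<not> p)"
    using sums_snoc_other[of "\<not> p" l y] len p_def by simp
  have "Inv (sums (l @ [y]) p) (sums (l @ [y]) (\<not> p))" using I2 e1 e2 by simp
  then have I3: "Inv (sums (l @ [y]) True) (sums (l @ [y]) False)" using Inv_iff by blast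
  have "y \<notin> set l" using g unfolding good_def by blast
  then show ?case using I3 len dl unfolding l_def y_def by simp
qed

definition a :: "nat \<Rightarrow> 'a" where "a i = seq (Suc i) ! i"

lemma seq_nth: "i < n \<Longrightarrow> seq n ! i = a i"
proof (induction n)
  case 0 then show ?case by simp
next
  case (Suc n)
  have len: "length (seq n) = n" using seq_props by blast
  show ?case
  proof (cases "i < n")
    case True
    then show ?thesis using Suc len by (simp add: nth_append)
  next
    case False
    then have "i = n" using Suc by simp
    then show ?thesis unfolding a_def by simp
  qed
qed

lemma sums_seq:
  "sums (seq n) p = {ssum a ks | ks. ks \<noteq> [] \<and> sorted_wrt (<) ks \<and> (\<forall>i\<in>set ks. i < n \<and> even i = p)}"
proof -
  have len: "length (seq n) = n" using seq_props by blast
  have cg: "ks \<noteq> [] \<Longrightarrow> (\<forall>i\<in>set ks. i < n) \<Longrightarrow> ssum (\<lambda>i. seq n ! i) ks = ssum a ks" for ks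
    by (rule ssum_cong) (auto simp: seq_nth)
  show ?thesis
  proof (rule set_eqI)
    fix x
    show "x \<in> sums (seq n) p \<longleftrightarrow> x \<in> {ssum a ks | ks. ks \<noteq> [] \<and> sorted_wrt (<) ks \<and> (\<forall>i\<in>set ks. i < n \<and> even i = p)}"
    proof
      assume "x \<in> sums (seq n) p"
      then obtain ks where ks: "x = ssum (\<lambda>i. seq n ! i) ks" "ks \<noteq> []" "sorted_wrt (<) ks"
        "\<forall>i\<in>set ks. i < length (seq n) \<and> even i = p" unfolding sums_def by blast
      have k2: "\<forall>i\<in>set ks. i < n \<and> even i = p" using ks(4) len by simp
      then have "x = ssum a ks" using ks(1) cg[OF ks(2)] by simp
      then show "x \<in> {ssum a ks | ks. ks \<noteq> [] \<and> sorted_wrt (<) ks \<and> (\<forall>i\<in>set ks. i < n \<and> even i = p)}"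
        using ks(2,3) k2 by blast
    next
      assume "x \<in> {ssum a ks | ks. ks \<noteq> [] \<and> sorted_wrt (<) ks \<and> (\<forall>i\<in>set ks. i < n \<and> even i = p)}"
      then obtain ks where ks: "x = ssum a ks" "ks \<noteq> []" "sorted_wrt (<) ks"
        "\<forall>i\<in>set ks. i < n \<and> even i = p" by blast
      have k2: "\<forall>i\<in>set ks. i < length (seq n) \<and> even i = p" using ks(4) len by simp
      have "x = ssum (\<lambda>i. seq n ! i) ks" using ks(1) cg[OF ks(2)] ks(4) by simp
      then show "x \<in> sums (seq n) p" unfolding sums_def using ks(2,3) k2 by blast
    qed
  qed
qed

lemma sums_mono: "n \<le> m \<Longrightarrow> sums (seq n) p \<subseteq> sums (seq m) p"
  unfolding sums_seq by fastforce

lemma a_inj: "inj a"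
proof (rule injI)
  fix i j assume eq: "a i = a j"
  define n where "n = Suc (max i j)"
  have "i < n" "j < n" unfolding n_def by auto
  moreover have "distinct (seq n)" "length (seq n) = n" using seq_props by auto
  ultimately show "i = j" using eq seq_nth[of i n] seq_nth[of j n] nth_eq_iff_index_eq by metis
qed

lemma FS_in_sums:
  assumes sm: "strict_mono f" and par: "\<And>k. even (f k) = p" and x: "x \<in> FS (\<lambda>k. a (f k))"
  shows "\<exists>n. x \<in> sums (seq n) p"
proof -
  obtain ks where ks: "ks \<noteq> []" "sorted_wrt (<) ks" "x = ssum (\<lambda>k. a (f k)) ks"
    using x unfolding FS_def by auto
  define js where "js = map f ks"
  have x2: "x = ssum a js" unfolding js_def using ks ssum_map[of ks a f] by simp
  have js1: "js \<noteq> []" unfolding js_def using ks(1) by simp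
  have js2: "sorted_wrt (<) js" unfolding js_def using ks(2) sm
    by (auto simp: sorted_wrt_map strict_mono_def elim: sorted_wrt_mono_rel[rotated])
  define n where "n = Suc (Max (set js))"
  have "\<forall>i\<in>set js. i < n \<and> even i = p"
    unfolding n_def js_def using par by (auto simp: le_imp_less_Suc)
  then have "x \<in> sums (seq n) p" unfolding sums_seq using x2 js1 js2 by blast
  then show ?thesis by blast
qed

lemma contra: False
proof -
  define d where "d k = a (2 * k)" for k
  define e where "e k = a (2 * k + 1)" for k
  have smd: "strict_mono (\<lambda>k::nat. 2 * k)" by (rule strict_monoI) simp
  have sme: "strict_mono (\<lambda>k::nat. 2 * k + 1)" by (rule strict_monoI) simp
  have dsub: "\<exists>n. x \<in> sums (seq n) True" if "x \<in> FS d" for x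
    using FS_in_sums[OF smd, of True x] that unfolding d_def by simp
  have esub: "\<exists>n. x \<in> sums (seq n) False" if "x \<in> FS e" for x
    using FS_in_sums[OF sme, of False x] that unfolding e_def by simp
  have sF: "sums (seq n) p \<subseteq> F" for n p
  proof -
    have "Inv (sums (seq n) p) (sums (seq n) (\<not> p))" using seq_props Inv_iff by blast
    then show ?thesis using Fs_sub unfolding Inv_def by blast
  qed
  have G1: "FS d \<subseteq> F" using dsub sF by blast
  have G2: "FS e \<subseteq> F" using esub sF by blast
  have injd: "inj d"
  proof (rule injI)
    fix x y assume "d x = d y"
    then have "2 * x = 2 * y" using injD[OF a_inj] unfolding d_def by blast
    then show "x = y" by simp
  qed
  have inje: "inj e"
  proof (rule injI)
    fix x y assume "e x = e y"
    then have "2 * x + 1 = 2 * y + 1" using injD[OF a_inj] unfolding e_def by blast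
    then show "x = y" by simp
  qed
  have P1: "proper_IP (FS d)" unfolding proper_IP_def using injd by blast
  have P2: "proper_IP (FS e)" unfolding proper_IP_def using inje by blast
  have disj: "FS d \<inter> FS e = {}"
  proof (rule ccontr)
    assume "FS d \<inter> FS e \<noteq> {}"
    then obtain x where x: "x \<in> FS d" "x \<in> FS e" by blast
    obtain n1 where n1: "x \<in> sums (seq n1) True" using dsub x(1) by blast
    obtain n2 where n2: "x \<in> sums (seq n2) False" using esub x(2) by blast
    define n where "n = max n1 n2"
    have "x \<in> sums (seq n) True" using n1 sums_mono[of n1 n] unfolding n_def by auto
    moreover have "x \<in> sums (seq n) False" using n2 sums_mono[of n2 n] unfolding n_def by auto
    moreover have "Inv (sums (seq n) True) (sums (seq n) False)" using seq_props by blast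
    ultimately show False unfolding Inv_def by blast
  qed
  have "\<not> Rp (F - FS d)" using H[OF G1 P1] .
  then have "Rp (FS d)" using Rp_split[OF RF, of "FS d" "F - FS d"] by blast
  moreover have "FS d \<subseteq> F - FS e" using G1 disj by blast
  ultimately have "Rp (F - FS e)" by (rule Rp_mono)
  then show False using H[OF G2 P2] by blast
qed

end

lemma key: assumes "Rp F" shows "\<exists>G\<subseteq>F. proper_IP G \<and> Rp (F - G)"
proof (rule ccontr)
  assume "\<not> (\<exists>G\<subseteq>F. proper_IP G \<and> Rp (F - G))"
  then interpret badF F using assms by unfold_locales blast+
  show False by (rule contra)
qed

definition chG :: "'a::semigroup_add set \<Rightarrow> 'a set" where
  "chG F = (SOME G. G \<subseteq> F \<and> proper_IP G \<and> Rp (F - G))"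

lemma chG: "Rp F \<Longrightarrow> chG F \<subseteq> F \<and> proper_IP (chG F) \<and> Rp (F - chG F)"
  unfolding chG_def using key by (rule someI_ex)

primrec Fseq :: "'a::semigroup_add set \<Rightarrow> nat \<Rightarrow> 'a set" where
  "Fseq F0 0 = F0"
| "Fseq F0 (Suc n) = Fseq F0 n - chG (Fseq F0 n)"

lemma Fseq_Rp: "Rp F0 \<Longrightarrow> Rp (Fseq F0 n)"
  by (induction n) (auto dest: chG)

lemma Fseq_anti: "m \<le> n \<Longrightarrow> Fseq F0 n \<subseteq> Fseq F0 m"
proof (induction n rule: dec_induct)
  case base then show ?case by simp
next
  case (step n) then show ?case by auto
qed

theorem theorem5p4:
  fixes c :: "'a::semigroup_add \<Rightarrow> 'c"
  assumes "\<forall>d :: 'a \<Rightarrow> nat. finite_coloring d \<longrightarrow>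
             (\<exists>A. proper_IP A \<and> monochromatic d A)"
    and "finite_coloring c"
  shows "\<exists>F :: nat \<Rightarrow> 'a set.
           (\<forall>n. proper_IP (F n) \<and> monochromatic c (F n)) \<and>
           (\<forall>m n. m \<noteq> n \<longrightarrow> F m \<inter> F n = {})"
proof -
  have RU: "Rp (UNIV :: 'a set)" using assms(1) unfolding Rp_def by blast
  have "UNIV = (\<Union>k\<in>range c. {x. c x = k})" by blast
  then have "Rp (\<Union>k\<in>range c. {x. c x = k})" using RU by simp
  then obtain k where k: "Rp {x. c x = k}"
    using Rp_finite_union[of "range c" "\<lambda>k. {x. c x = k}"] assms(2)
    unfolding finite_coloring_def by blast
  define F0 where "F0 = {x. c x = k}"
  define G where "G n = chG (Fseq F0 n)" for n
  have R: "Rp (Fseq F0 n)" for n using Fseq_Rp k unfolding F0_def by blast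
  have Gp: "G n \<subseteq> Fseq F0 n \<and> proper_IP (G n)" for n using chG[OF R] unfolding G_def by blast
  have GF0: "G n \<subseteq> F0" for n using Gp Fseq_anti[of 0 n F0] by auto
  have dj: "G m \<inter> G n = {}" if "m < n" for m n
  proof -
    have "G n \<subseteq> Fseq F0 (Suc m)" using Gp[of n] Fseq_anti[of "Suc m" n F0] that by auto
    then show ?thesis unfolding G_def by auto
  qed
  show ?thesis
  proof (intro exI[of _ G] conjI allI impI)
    fix n
    show "proper_IP (G n)" using Gp by blast
    show "monochromatic c (G n)" unfolding monochromatic_def using GF0[of n] unfolding F0_def by blast
  next
    fix m n :: nat assume "m \<noteq> n"
    then show "G m \<inter> G n = {}" using dj[of m n] dj[of n m] by (cases "m < n") auto
  qed
qed


end
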